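(* A compact Hausdorff flow $(X,T)$ has the property that every point of $X$ is almost automorphic if and only if $(X,T)$ is distal and the restriction of the action to every minimal subset of $X$ is equicontinuous.
   Context: $X$ compact Hausdorff, $T$ a topological group acting continuously on $X$. A point $x$ is almost automorphic if for every net $\{t_i\}\subset T$ with $t_ix\to y$ it holds that $t_i^{-1}y\to x$. The flow is distal if for any two distinct points $x\ne y$ there are no net $\{t_i\}\subset T$ and $z\in X$ with $t_ix\to z$ and $t_iy\to z$. A minimal set is a nonempty closed $T$-invariant subset $M$ in which every orbit is dense; $(M,T)$ is equicontinuous if for every entourage $\alpha$ of $M$ there is an entourage $\beta$ with $(x,y)\in\beta\Rightarrow(tx,ty)\in\alpha$ for all $t\in T$. *)

theory Defs
  imports "HOL-Analysis.Analysis"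
begin

text \<open>A (left) continuous action of a topological group T (written additively,
  class topological_group_add, not necessarily abelian) on a space X.\<close>
definition continuous_action :: "('g::topological_group_add \<Rightarrow> 'x::topological_space \<Rightarrow> 'x) \<Rightarrow> bool" where
  "continuous_action act \<longleftrightarrow>
     (\<forall>x. act 0 x = x) \<and> (\<forall>s t x. act (s + t) x = act s (act t x)) \<and>
     continuous_on UNIV (\<lambda>p. act (fst p) (snd p))"

text \<open>Nets in T are represented by their (proper) eventuality filters F on T.\<close>
definition almost_automorphic_point :: "('g::topological_group_add \<Rightarrow> 'x::topological_space \<Rightarrow> 'x) \<Rightarrow> 'x \<Rightarrow> bool" where
  "almost_automorphic_point act x \<longleftrightarrow>
     (\<forall>(F::'g filter) y. F \<noteq> bot \<longrightarrow> ((\<lambda>t. act t x) \<longlongrightarrow> y) F \<longrightarrow> ((\<lambda>t. act (- t) y) \<longlongrightarrow> x) F)"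

definition distal_flow :: "('g::topological_group_add \<Rightarrow> 'x::topological_space \<Rightarrow> 'x) \<Rightarrow> bool" where
  "distal_flow act \<longleftrightarrow>
     (\<forall>x y. x \<noteq> y \<longrightarrow> \<not> (\<exists>(F::'g filter) z. F \<noteq> bot \<and>
        ((\<lambda>t. act t x) \<longlongrightarrow> z) F \<and> ((\<lambda>t. act t y) \<longlongrightarrow> z) F))"

definition minimal_set :: "('g::topological_group_add \<Rightarrow> 'x::topological_space \<Rightarrow> 'x) \<Rightarrow> 'x set \<Rightarrow> bool" where
  "minimal_set act M \<longleftrightarrow>
     M \<noteq> {} \<and> closed M \<and> (\<forall>t. \<forall>x\<in>M. act t x \<in> M) \<and>
     (\<forall>x\<in>M. closure (range (\<lambda>t. act t x)) = M)"

text \<open>Entourages of the (unique) uniformity of a compact Hausdorff subspace M: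
  the neighbourhoods of the diagonal of M in M \<times> M.\<close>
definition entourage_on :: "'x::topological_space set \<Rightarrow> ('x \<times> 'x) set \<Rightarrow> bool" where
  "entourage_on M E \<longleftrightarrow> E \<subseteq> M \<times> M \<and>
     (\<exists>U. open U \<and> (\<forall>x\<in>M. (x, x) \<in> U) \<and> U \<inter> (M \<times> M) \<subseteq> E)"

definition equicontinuous_on :: "('g::topological_group_add \<Rightarrow> 'x::topological_space \<Rightarrow> 'x) \<Rightarrow> 'x set \<Rightarrow> bool" where
  "equicontinuous_on act M \<longleftrightarrow>
     (\<forall>\<alpha>. entourage_on M \<alpha> \<longrightarrow> (\<exists>\<beta>. entourage_on M \<beta> \<and>
        (\<forall>x y. (x, y) \<in> \<beta> \<longrightarrow> (\<forall>t. (act t x, act t y) \<in> \<alpha>))))"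

end

theory Submission
  imports Defs
begin
lemma tendsto_fun_iff:
  fixes f :: "'i \<Rightarrow> 'a \<Rightarrow> 'b::topological_space"
  shows "(f \<longlongrightarrow> l) F \<longleftrightarrow> (\<forall>x. ((\<lambda>i. f i x) \<longlongrightarrow> l x) F)"
proof -
  have "(f \<longlongrightarrow> l) F \<longleftrightarrow> limitin (product_topology (\<lambda>i. euclidean) UNIV) f l F"
    by (simp add: euclidean_product_topology)
  also have "\<dots> \<longleftrightarrow> (\<forall>x. ((\<lambda>i. f i x) \<longlongrightarrow> l x) F)"
    by (subst limitin_componentwise) auto
  finally show ?thesis .
qed

lemma compact_UNIV_fun:
  assumes "compact (UNIV :: 'b::topological_space set)"
  shows "compact (UNIV :: ('a \<Rightarrow> 'b) set)"
proof -
  have "compact_space (euclidean :: 'b topology)"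
    using assms by (simp add: compact_space_def)
  then have "compact_space (product_topology (\<lambda>i::'a. (euclidean :: 'b topology)) UNIV)"
    by (simp add: compact_space_product_topology)
  then show ?thesis
    by (simp add: euclidean_product_topology compact_space_def)
qed

lemma cluster_refine:
  fixes f :: "'a \<Rightarrow> 'b::topological_space"
  assumes "compact (UNIV :: 'b set)" "F \<noteq> bot"
  shows "\<exists>z. inf F (filtercomap f (nhds z)) \<noteq> bot"
proof -
  have "filtermap f F \<noteq> bot" using assms(2) by (simp add: filtermap_bot_iff)
  then obtain z where z: "inf (nhds z) (filtermap f F) \<noteq> bot"
    using assms(1) unfolding compact_filter by auto
  have "inf F (filtercomap f (nhds z)) \<noteq> bot"
  proof
    assume "inf F (filtercomap f (nhds z)) = bot"
    then have "eventually (\<lambda>x. False) (inf F (filtercomap f (nhds z)))" by simp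
    then obtain Q R where Q: "eventually Q F" and R: "eventually R (filtercomap f (nhds z))"
      and QR: "\<forall>x. Q x \<and> R x \<longrightarrow> False"
      unfolding eventually_inf by blast
    from R obtain R' where R': "eventually R' (nhds z)" and RR: "\<forall>x. R' (f x) \<longrightarrow> R x"
      unfolding eventually_filtercomap by blast
    have "eventually (\<lambda>x. \<not> R' (f x)) F" using Q by (rule eventually_mono) (use QR RR in blast)
    then have "eventually (\<lambda>y. \<not> R' y) (filtermap f F)" by (simp add: eventually_filtermap)
    then have "eventually (\<lambda>y. False) (inf (nhds z) (filtermap f F))"
      using R' unfolding eventually_inf by blast
    with z show False by (simp add: eventually_False)
  qed
  then show ?thesis by blast
qed

lemma inf_ne_botI:
  assumes "\<And>P Q. eventually P F \<Longrightarrow> eventually Q G \<Longrightarrow> \<exists>x. P x \<and> Q x"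
  shows "inf F G \<noteq> bot"
proof
  assume "inf F G = bot"
  then have "eventually (\<lambda>x. False) (inf F G)" by simp
  then obtain Q R where "eventually Q F" "eventually R G" "\<forall>x. Q x \<and> R x \<longrightarrow> False"
    unfolding eventually_inf by blast
  with assms show False by blast
qed

lemma inf_eventually_ex:
  assumes "inf F G \<noteq> bot" "eventually P F" "eventually Q G"
  shows "\<exists>x. P x \<and> Q x"
proof -
  have "eventually (\<lambda>x. P x \<and> Q x) (inf F G)"
    using assms(2,3) unfolding eventually_inf by blast
  then show ?thesis using assms(1) eventually_happens by blast
qed

lemma uncountable_nat_bool: "\<not> countable (UNIV :: (nat \<Rightarrow> bool) set)"
proof
  assume "countable (UNIV :: (nat \<Rightarrow> bool) set)"
  then obtain f :: "(nat \<Rightarrow> bool) \<Rightarrow> nat" where f: "inj f"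
    unfolding countable_def by blast
  define g where "g n = (\<not> inv f n n)" for n
  have "inv f (f g) = g" using f by simp
  then have "g (f g) = (\<not> g (f g))" by (metis g_def)
  then show False by simp
qed

locale flow =
  fixes act :: "'g::topological_group_add \<Rightarrow> 'x::t2_space \<Rightarrow> 'x"
  assumes cpt: "compact (UNIV :: 'x set)"
    and ca: "continuous_action act"
begin

lemma act0[simp]: "act 0 x = x" using ca by (simp add: continuous_action_def)
lemma act_add: "act (s + t) x = act s (act t x)" using ca by (simp add: continuous_action_def)
lemma act_inv1[simp]: "act (-t) (act t x) = x"
  by (metis act0 act_add left_minus)
lemma act_inv2[simp]: "act t (act (-t) x) = x"
  by (metis act0 act_add right_minus)

lemma cont_joint: "continuous_on UNIV (\<lambda>p. act (fst p) (snd p))"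
  using ca by (simp add: continuous_action_def)

lemma cont_act: "continuous_on UNIV (act t)"
proof -
  have "continuous_on UNIV (\<lambda>x. (t, x))" by (intro continuous_intros)
  then have "continuous_on UNIV ((\<lambda>p. act (fst p) (snd p)) \<circ> (\<lambda>x. (t, x)))"
    by (rule continuous_on_compose) (rule continuous_on_subset[OF cont_joint], simp)
  then show ?thesis by (simp add: o_def)
qed

lemma cont_act_at: "isCont (act t) x"
  using cont_act by (simp add: continuous_on_eq_continuous_at)

lemma open_vimage_act: "open V \<Longrightarrow> open (act t -` V)"
  using cont_act open_vimage by blast

lemma tendsto_act: "(f \<longlongrightarrow> l) F \<Longrightarrow> ((\<lambda>i. act t (f i)) \<longlongrightarrow> act t l) F"
  using cont_act_at isCont_tendsto_compose by blast

definition AA where "AA \<longleftrightarrow> (\<forall>x. almost_automorphic_point act x)"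

lemma AA_D:
  assumes "AA" "F \<noteq> bot" "((\<lambda>t. act t x) \<longlongrightarrow> y) F"
  shows "((\<lambda>t. act (- t) y) \<longlongrightarrow> x) F"
  using assms unfolding AA_def almost_automorphic_point_def by blast

lemma AA_distal: "AA \<Longrightarrow> distal_flow act"
  unfolding distal_flow_def
proof (intro allI impI notI)
  fix x y :: 'x assume aa: AA and xy: "x \<noteq> y"
  assume "\<exists>(F::'g filter) z. F \<noteq> bot \<and> ((\<lambda>t. act t x) \<longlongrightarrow> z) F \<and> ((\<lambda>t. act t y) \<longlongrightarrow> z) F"
  then obtain F :: "'g filter" and z where F: "F \<noteq> bot" "((\<lambda>t. act t x) \<longlongrightarrow> z) F" "((\<lambda>t. act t y) \<longlongrightarrow> z) F"
    by blast
  have "((\<lambda>t. act (-t) z) \<longlongrightarrow> x) F" "((\<lambda>t. act (-t) z) \<longlongrightarrow> y) F"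
    using AA_D[OF aa F(1) F(2)] AA_D[OF aa F(1) F(3)] by auto
  then have "x = y" using F(1) tendsto_unique by blast
  with xy show False by simp
qed

end

lemma filtercomap_closure_ne_bot:
  assumes "l \<in> closure (range f)"
  shows "filtercomap f (nhds l) \<noteq> bot"
proof
  assume "filtercomap f (nhds l) = bot"
  then have "eventually (\<lambda>x. False) (filtercomap f (nhds l))" by simp
  then obtain Q where Q: "eventually Q (nhds l)" "\<forall>x. Q (f x) \<longrightarrow> False"
    unfolding eventually_filtercomap by blast
  then obtain S where S: "open S" "l \<in> S" "\<forall>y\<in>S. Q y" unfolding eventually_nhds by blast
  have "S \<inter> closure (range f) \<noteq> {}" using assms S(2) by blast
  then have "S \<inter> range f \<noteq> {}" using open_Int_closure_eq_empty[OF S(1)] by simp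
  with S Q show False by blast
qed

lemma cont_tendsto:
  assumes "(g \<longlongrightarrow> l) F" "continuous_on UNIV f"
  shows "((\<lambda>x. f (g x)) \<longlongrightarrow> f l) F"
  by (rule continuous_on_tendsto_compose[OF assms(2) assms(1)]) auto

lemma not_eventually_inf_principal:
  assumes "\<not> eventually P F"
  shows "inf F (principal {x. \<not> P x}) \<noteq> bot"
  using assms by (simp add: trivial_limit_def eventually_inf_principal)

context flow begin

lemma hausdorff_eucl: "Hausdorff_space (euclidean :: 'x topology)"
  unfolding Hausdorff_space_def by (metis disjnt_def hausdorff open_openin)

lemma normal_eucl: "normal_space (euclidean :: 'x topology)"
  by (rule compact_Hausdorff_or_regular_imp_normal_space)
    (use cpt hausdorff_eucl in \<open>auto simp: compact_space_def\<close>)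

lemma urysohn_pts:
  assumes "p \<noteq> q"
  obtains \<phi> :: "'x \<Rightarrow> real" where "continuous_on UNIV \<phi>" "\<And>x. \<phi> x \<in> {0..1}" "\<phi> p = 0" "\<phi> q = 1"
proof -
  have "closedin euclidean {p}" "closedin euclidean {q}" "disjnt {p} {q}" using assms by auto
  then obtain f :: "'x \<Rightarrow> real" where f: "continuous_map euclidean (top_of_set {0..1}) f" "f ` {p} \<subseteq> {0}" "f ` {q} \<subseteq> {1}"
    using normal_eucl unfolding normal_space_iff_Urysohn by blast
  have "continuous_on UNIV f" "\<And>x. f x \<in> {0..1}"
    using f(1) by (auto simp: continuous_map_in_subtopology)
  then show ?thesis using that f(2,3) by auto
qed

lemma equi_lim:
  assumes eq: "equicontinuous_on act M" and G: "G \<noteq> bot"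
    and ab: "\<And>t. a t \<in> M" "\<And>t. b t \<in> M" and c: "c \<in> M"
    and la: "(a \<longlongrightarrow> c) G" and lb: "(b \<longlongrightarrow> c) G"
    and ld: "((\<lambda>t. act (s t) (a t)) \<longlongrightarrow> d) G" and ld': "((\<lambda>t. act (s t) (b t)) \<longlongrightarrow> d') G"
  shows "d = d'"
proof (rule ccontr)
  assume "d \<noteq> d'"
  then obtain \<phi> :: "'x \<Rightarrow> real" where \<phi>: "continuous_on UNIV \<phi>" "\<phi> d = 0" "\<phi> d' = 1"
    using urysohn_pts by metis
  define U where "U = {p. \<bar>\<phi> (fst p) - \<phi> (snd p)\<bar> < 1/3}"
  have c1: "continuous_on UNIV (\<lambda>p::'x\<times>'x. \<phi> (fst p))"
    by (rule continuous_on_compose2[OF \<phi>(1)]) (auto intro: continuous_intros)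
  have c2: "continuous_on UNIV (\<lambda>p::'x\<times>'x. \<phi> (snd p))"
    by (rule continuous_on_compose2[OF \<phi>(1)]) (auto intro: continuous_intros)
  have "open U" unfolding U_def
    by (rule open_Collect_less[OF continuous_on_rabs[OF continuous_on_diff[OF c1 c2]] continuous_on_const])
  define \<alpha> where "\<alpha> = U \<inter> (M \<times> M)"
  have "entourage_on M \<alpha>" unfolding entourage_on_def \<alpha>_def
    using \<open>open U\<close> by (auto simp: U_def)
  then obtain \<beta> where \<beta>: "entourage_on M \<beta>" and \<beta>\<alpha>: "\<And>x y t. (x, y) \<in> \<beta> \<Longrightarrow> (act t x, act t y) \<in> \<alpha>"
    using eq unfolding equicontinuous_on_def by blast
  then obtain V where V: "open V" "\<And>x. x \<in> M \<Longrightarrow> (x, x) \<in> V" "V \<inter> (M \<times> M) \<subseteq> \<beta>"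
    unfolding entourage_on_def by blast
  have "((\<lambda>t. (a t, b t)) \<longlongrightarrow> (c, c)) G" using la lb by (rule tendsto_Pair)
  then have "eventually (\<lambda>t. (a t, b t) \<in> V) G"
    using V(1) V(2)[OF c] topological_tendstoD by blast
  then have ev1: "eventually (\<lambda>t. \<bar>\<phi> (act (s t) (a t)) - \<phi> (act (s t) (b t))\<bar> < 1/3) G"
  proof (rule eventually_mono)
    fix t assume "(a t, b t) \<in> V"
    then have "(a t, b t) \<in> \<beta>" using V(3) ab by auto
    from \<beta>\<alpha>[OF this] show "\<bar>\<phi> (act (s t) (a t)) - \<phi> (act (s t) (b t))\<bar> < 1/3"
      by (auto simp: \<alpha>_def U_def)
  qed
  have "((\<lambda>t. \<phi> (act (s t) (a t))) \<longlongrightarrow> \<phi> d) G"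
    using ld \<phi>(1) by (rule cont_tendsto)
  then have ev2: "eventually (\<lambda>t. \<phi> (act (s t) (a t)) < 1/3) G"
    using \<phi>(2) by (intro order_tendstoD) auto
  have "((\<lambda>t. \<phi> (act (s t) (b t))) \<longlongrightarrow> \<phi> d') G"
    using ld' \<phi>(1) by (rule cont_tendsto)
  then have ev3: "eventually (\<lambda>t. \<phi> (act (s t) (b t)) > 2/3) G"
    using \<phi>(3) by (intro order_tendstoD) auto
  have "eventually (\<lambda>t. False) G"
    using eventually_conj[OF ev1 eventually_conj[OF ev2 ev3]] by (rule eventually_mono) auto
  with G show False by (simp add: trivial_limit_def)
qed


end

lemma finite_chain_min:
  assumes "finite F" "F \<noteq> {}" "\<forall>a\<in>F. \<forall>b\<in>F. a \<subseteq> b \<or> b \<subseteq> a"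
  shows "\<exists>m\<in>F. \<forall>a\<in>F. m \<subseteq> (a::'a set)"
  using assms
proof (induction F rule: finite_ne_induct)
  case (singleton x) then show ?case by auto
next
  case (insert x F)
  then obtain m where m: "m \<in> F" "\<forall>a\<in>F. m \<subseteq> a" by auto
  show ?case
  proof (cases "x \<subseteq> m")
    case True then show ?thesis using m by auto
  next
    case False
    then have "m \<subseteq> x" using insert.prems m(1) by auto
    then show ?thesis using m by auto
  qed
qed

context flow begin

lemma closure_orbit_invariant:
  assumes "\<forall>t. \<forall>y\<in>R. act t y \<in> R"
  shows "\<forall>t. \<forall>y\<in>closure R. act t y \<in> closure R"
proof (intro allI ballI)
  fix t y assume y: "y \<in> closure R"
  have "act t ` closure R \<subseteq> closure R"
  proof (rule image_closure_subset)
    show "continuous_on (closure R) (act t)" by (rule continuous_on_subset[OF cont_act]) simp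
    show "act t ` R \<subseteq> closure R" using assms closure_subset by fastforce
  qed simp
  then show "act t y \<in> closure R" using y by blast
qed

lemma orbit_invariant: "\<forall>t. \<forall>y\<in>range (\<lambda>s. act s x). act t y \<in> range (\<lambda>s. act s x)"
  by (auto simp flip: act_add)

lemma exists_minimal:
  assumes S: "S \<noteq> {}" "closed S" "\<forall>t. \<forall>x\<in>S. act t x \<in> S"
  shows "\<exists>M \<subseteq> S. minimal_set act M"
proof -
  define Fam where "Fam = {K. K \<subseteq> S \<and> K \<noteq> {} \<and> closed K \<and> (\<forall>t. \<forall>x\<in>K. act t x \<in> K)}"
  define A where "A = uminus ` Fam"
  have "\<forall>C\<in>chains A. \<exists>U\<in>A. \<forall>X\<in>C. X \<subseteq> U"
  proof
    fix C assume C: "C \<in> chains A"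
    then have CA: "C \<subseteq> A" and ch: "\<forall>X\<in>C. \<forall>Y\<in>C. X \<subseteq> Y \<or> Y \<subseteq> X"
      by (auto simp: chains_def chain_subset_def)
    show "\<exists>U\<in>A. \<forall>X\<in>C. X \<subseteq> U"
    proof (cases "C = {}")
      case True
      have "-S \<in> A" using S unfolding A_def Fam_def by auto
      then show ?thesis using True by blast
    next
      case False
      define K0 where "K0 = \<Inter> (uminus ` C)"
      have famK: "\<And>K. K \<in> uminus ` C \<Longrightarrow> K \<in> Fam"
        using CA unfolding A_def by auto
      have clK: "\<And>K. K \<in> uminus ` C \<Longrightarrow> closed K"
        using famK unfolding Fam_def by blast
      have "UNIV \<inter> \<Inter> (uminus ` C) \<noteq> {}"
      proof (rule compact_imp_fip[OF cpt clK])
        fix F' assume F': "finite F'" "F' \<subseteq> uminus ` C"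
        show "UNIV \<inter> \<Inter> F' \<noteq> {}"
        proof (cases "F' = {}")
          case True then show ?thesis by simp
        next
          case False
          have "\<forall>a\<in>F'. \<forall>b\<in>F'. a \<subseteq> b \<or> b \<subseteq> a"
          proof (intro ballI)
            fix a b assume "a \<in> F'" "b \<in> F'"
            then obtain X Y where "X \<in> C" "Y \<in> C" "a = -X" "b = -Y" using F'(2) by blast
            then show "a \<subseteq> b \<or> b \<subseteq> a" using ch by blast
          qed
          then obtain m where m: "m \<in> F'" "\<forall>a\<in>F'. m \<subseteq> a"
            using finite_chain_min[OF F'(1) False] by blast
          have "m \<in> Fam" using famK F'(2) m(1) by blast
          then have "m \<noteq> {}" unfolding Fam_def by simp
          moreover have "m \<subseteq> \<Inter> F'" using m by auto
          ultimately show ?thesis by auto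
        qed
      qed auto
      then have ne: "K0 \<noteq> {}" unfolding K0_def by simp
      obtain C0 where "C0 \<in> C" using False by blast
      have "K0 \<in> Fam"
        unfolding Fam_def
      proof (intro CollectI conjI)
        show "K0 \<subseteq> S" using famK \<open>C0 \<in> C\<close> unfolding K0_def Fam_def by blast
        show "K0 \<noteq> {}" by (rule ne)
        show "closed K0" unfolding K0_def using clK by (intro closed_Inter) auto
        show "\<forall>t. \<forall>x\<in>K0. act t x \<in> K0"
          using famK unfolding K0_def Fam_def by blast
      qed
      then have "-K0 \<in> A" unfolding A_def by blast
      moreover have "\<forall>X\<in>C. X \<subseteq> -K0" unfolding K0_def by auto
      ultimately show ?thesis by blast
    qed
  qed
  then obtain Mc where Mc: "Mc \<in> A" "\<forall>X\<in>A. Mc \<subseteq> X \<longrightarrow> X = Mc"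
    using Zorn_Lemma2[of A] by blast
  define M0 where "M0 = -Mc"
  have M0F: "M0 \<in> Fam" using Mc(1) unfolding M0_def A_def by auto
  have mini: "K = M0" if "K \<in> Fam" "K \<subseteq> M0" for K
  proof -
    have "-K \<in> A" using that(1) unfolding A_def by blast
    moreover have "Mc \<subseteq> -K" using that(2) unfolding M0_def by auto
    ultimately have "-K = Mc" using Mc(2) by blast
    then show ?thesis unfolding M0_def by auto
  qed
  have "minimal_set act M0"
    unfolding minimal_set_def
  proof (intro conjI ballI allI)
    show "M0 \<noteq> {}" "closed M0" using M0F unfolding Fam_def by auto
    show "act t x \<in> M0" if "x \<in> M0" for t x using M0F that unfolding Fam_def by auto
    fix x assume x: "x \<in> M0"
    let ?K = "closure (range (\<lambda>t. act t x))"
    have "range (\<lambda>t. act t x) \<subseteq> M0" using M0F x unfolding Fam_def by auto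
    then have sub: "?K \<subseteq> M0" using M0F unfolding Fam_def by (simp add: closure_minimal)
    have "?K \<in> Fam"
      unfolding Fam_def using sub M0F closure_orbit_invariant[OF orbit_invariant]
      by (auto simp: Fam_def)
    then show "?K = M0" using mini sub by blast
  qed
  moreover have "M0 \<subseteq> S" using M0F unfolding Fam_def by auto
  ultimately show ?thesis by blast
qed

theorem converse_AA:
  assumes dist: "distal_flow act" and eqm: "\<forall>M. minimal_set act M \<longrightarrow> equicontinuous_on act M"
  shows "almost_automorphic_point act x"
proof -
  let ?S = "closure (range (\<lambda>t. act t x))"
  have Sinv: "\<forall>t. \<forall>y\<in>?S. act t y \<in> ?S" by (rule closure_orbit_invariant[OF orbit_invariant])
  obtain M0 where M0: "M0 \<subseteq> ?S" "minimal_set act M0"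
    using exists_minimal[of ?S] Sinv by auto
  have M0c: "closed M0" and M0i: "\<And>t y. y \<in> M0 \<Longrightarrow> act t y \<in> M0" and M0ne: "M0 \<noteq> {}"
    and M0o: "\<And>y. y \<in> M0 \<Longrightarrow> closure (range (\<lambda>t. act t y)) = M0"
    using M0(2) unfolding minimal_set_def by auto
  have eq0: "equicontinuous_on act M0" using eqm M0(2) by blast
  obtain m where m: "m \<in> M0" using M0ne by blast
  define F0 where "F0 = filtercomap (\<lambda>t. act t x) (nhds m)"
  have F0: "F0 \<noteq> bot" unfolding F0_def
    by (rule filtercomap_closure_ne_bot) (use M0(1) m in blast)
  have lim0: "((\<lambda>t. act t x) \<longlongrightarrow> m) F0" unfolding F0_def by (rule filterlim_filtercomap)
  obtain y0 where F1ne: "inf F0 (filtercomap (\<lambda>t. act (-t) m) (nhds y0)) \<noteq> bot"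
    using cluster_refine[OF cpt F0] by blast
  define F1 where "F1 = inf F0 (filtercomap (\<lambda>t. act (-t) m) (nhds y0))"
  have F1: "F1 \<noteq> bot" using F1ne F1_def by simp
  have lim1: "((\<lambda>t. act (-t) m) \<longlongrightarrow> y0) F1"
    unfolding F1_def by (rule tendsto_mono[OF inf_le2 filterlim_filtercomap])
  have y0: "y0 \<in> M0"
    by (rule Lim_in_closed_set[OF M0c _ F1 lim1]) (use M0i m in auto)
  obtain d' where F2ne: "inf F1 (filtercomap (\<lambda>t. act t y0) (nhds d')) \<noteq> bot"
    using cluster_refine[OF cpt F1] by blast
  define F2 where "F2 = inf F1 (filtercomap (\<lambda>t. act t y0) (nhds d'))"
  have F2: "F2 \<noteq> bot" using F2ne F2_def by simp
  have lim2: "((\<lambda>t. act t y0) \<longlongrightarrow> d') F2"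
    unfolding F2_def by (rule tendsto_mono[OF inf_le2 filterlim_filtercomap])
  have F2le1: "F2 \<le> F1" unfolding F2_def by (rule inf_le1)
  have F1le0: "F1 \<le> F0" unfolding F1_def by (rule inf_le1)
  note F2le = F2le1 F1le0
  have "m = d'"
  proof (rule equi_lim[OF eq0 F2, where a="\<lambda>t. act (-t) m" and b="\<lambda>t. y0" and c=y0 and s="\<lambda>t. t"])
    show "((\<lambda>t. act (-t) m) \<longlongrightarrow> y0) F2" using lim1 F2le by (blast intro: tendsto_mono)
    show "((\<lambda>t. act t (act (- t) m)) \<longlongrightarrow> m) F2" by simp
  qed (use lim2 y0 M0i m in auto)
  have "x = y0"
  proof (rule ccontr)
    assume xy: "x \<noteq> y0"
    have limx: "((\<lambda>t. act t x) \<longlongrightarrow> m) F2" using lim0 F2le by (blast intro: tendsto_mono order_trans)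
    have nd: "\<And>(F::'g filter) z. F \<noteq> bot \<Longrightarrow> ((\<lambda>t. act t x) \<longlongrightarrow> z) F \<Longrightarrow> ((\<lambda>t. act t y0) \<longlongrightarrow> z) F \<Longrightarrow> False"
      using dist xy unfolding distal_flow_def by blast
    show False using nd[OF F2 limx] lim2 \<open>m = d'\<close> by simp
  qed
  then have xM: "x \<in> M0" using y0 by simp
  show ?thesis
    unfolding almost_automorphic_point_def
  proof (intro allI impI)
    fix F :: "'g filter" and y
    assume F: "F \<noteq> bot" and lim: "((\<lambda>t. act t x) \<longlongrightarrow> y) F"
    have yM: "y \<in> M0" by (rule Lim_in_closed_set[OF M0c _ F lim]) (use M0i xM in auto)
    show "((\<lambda>t. act (- t) y) \<longlongrightarrow> x) F"
    proof (rule ccontr)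
      assume "\<not> ((\<lambda>t. act (- t) y) \<longlongrightarrow> x) F"
      then obtain W where W: "open W" "x \<in> W" "\<not> eventually (\<lambda>t. act (-t) y \<in> W) F"
        unfolding tendsto_def by blast
      define F' where "F' = inf F (principal {t. \<not> act (-t) y \<in> W})"
      have F': "F' \<noteq> bot" unfolding F'_def by (rule not_eventually_inf_principal[OF W(3)])
      obtain z where F''ne: "inf F' (filtercomap (\<lambda>t. act (-t) y) (nhds z)) \<noteq> bot"
        using cluster_refine[OF cpt F'] by blast
      define F'' where "F'' = inf F' (filtercomap (\<lambda>t. act (-t) y) (nhds z))"
      have F'': "F'' \<noteq> bot" using F''ne F''_def by simp
      have limz: "((\<lambda>t. act (-t) y) \<longlongrightarrow> z) F''"
        unfolding F''_def by (rule tendsto_mono[OF inf_le2 filterlim_filtercomap])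
      have le: "F'' \<le> F" unfolding F''_def F'_def by (meson inf_le1 order_trans)
      have "eventually (\<lambda>t. act (-t) y \<in> -W) F''"
      proof -
        have "eventually (\<lambda>t. act (-t) y \<in> -W) F'"
          unfolding F'_def eventually_inf_principal by simp
        then show ?thesis unfolding F''_def by (rule filter_leD[OF inf_le1])
      qed
      then have "z \<in> -W" using Lim_in_closed_set[OF _ _ F'' limz] W(1) by blast
      moreover have "x = z"
      proof (rule equi_lim[OF eq0 F'', where a="\<lambda>t. act t x" and b="\<lambda>t. y" and c=y and s="\<lambda>t. -t"])
        show "((\<lambda>t. act t x) \<longlongrightarrow> y) F''" using lim le by (rule tendsto_mono[rotated])
        show "((\<lambda>t. act (- t) (act t x)) \<longlongrightarrow> x) F''" by simp
      qed (use limz yM M0i xM in auto)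
      ultimately show False using W(2) by simp
    qed
  qed
qed

end

locale aa_flow = flow act for act :: "'g::topological_group_add \<Rightarrow> 'x::t2_space \<Rightarrow> 'x" +
  assumes aa: "\<forall>x. almost_automorphic_point act x"
begin

lemma AA: AA using aa by (simp add: AA_def)

definition EE :: "('x \<Rightarrow> 'x) set" where "EE = closure (range act)"

lemma compact_EE: "compact EE"
proof -
  have "compact (UNIV :: ('x \<Rightarrow> 'x) set)" by (rule compact_UNIV_fun[OF cpt])
  then have "compact (UNIV \<inter> EE)" by (intro compact_Int_closed) (auto simp: EE_def)
  then show ?thesis by simp
qed

lemma closed_EE: "closed EE" by (simp add: EE_def)

lemma act_in_EE: "act t \<in> EE" unfolding EE_def by (rule closure_subset[THEN subsetD]) simp

lemma lim_in_EE:
  assumes "F \<noteq> bot" "(f \<longlongrightarrow> l) F" "\<And>i. f i \<in> EE"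
  shows "l \<in> EE"
  by (rule Lim_in_closed_set[OF closed_EE _ assms(1,2)]) (use assms(3) in auto)

lemma cont_eval: "continuous_on UNIV (\<lambda>g::'x\<Rightarrow>'x. g p)"
  by simp

lemma inverse_from_filter:
  assumes F: "F \<noteq> bot" and le: "(act \<longlongrightarrow> e) F" and lc: "((\<lambda>t. act (-t)) \<longlongrightarrow> c) F"
  shows "\<And>x. c (e x) = x" and "\<And>y. e (c y) = y"
proof -
  fix x
  have "((\<lambda>t. act t x) \<longlongrightarrow> e x) F" using le by (simp add: tendsto_fun_iff)
  then have "((\<lambda>t. act (-t) (e x)) \<longlongrightarrow> x) F" by (rule AA_D[OF AA F])
  moreover have "((\<lambda>t. act (-t) (e x)) \<longlongrightarrow> c (e x)) F" using lc by (simp add: tendsto_fun_iff)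
  ultimately show "c (e x) = x" using F tendsto_unique by blast
next
  fix y
  have G: "filtermap uminus F \<noteq> bot" using F by (simp add: filtermap_bot_iff)
  have "((\<lambda>t. act (-t) y) \<longlongrightarrow> c y) F" using lc by (simp add: tendsto_fun_iff)
  then have "((\<lambda>s. act s y) \<longlongrightarrow> c y) (filtermap uminus F)"
    by (simp add: filterlim_filtermap)
  then have "((\<lambda>s. act (-s) (c y)) \<longlongrightarrow> y) (filtermap uminus F)" by (rule AA_D[OF AA G])
  then have "((\<lambda>t. act t (c y)) \<longlongrightarrow> y) F" by (simp add: filterlim_filtermap)
  moreover have "((\<lambda>t. act t (c y)) \<longlongrightarrow> e (c y)) F" using le by (simp add: tendsto_fun_iff)
  ultimately show "e (c y) = y" using F tendsto_unique by blast
qed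

lemma good_filter_ex:
  assumes "e \<in> EE"
  shows "\<exists>c F. c \<in> EE \<and> F \<noteq> bot \<and> (act \<longlongrightarrow> e) F \<and> ((\<lambda>t. act (-t)) \<longlongrightarrow> c) F"
proof -
  define F0 where "F0 = filtercomap act (nhds e)"
  have F0: "F0 \<noteq> bot" unfolding F0_def
    by (rule filtercomap_closure_ne_bot) (use assms in \<open>simp add: EE_def\<close>)
  obtain c where F1: "inf F0 (filtercomap (\<lambda>t. act (-t)) (nhds c)) \<noteq> bot"
    using cluster_refine[OF compact_UNIV_fun[OF cpt] F0] by blast
  define F1 where "F1 = inf F0 (filtercomap (\<lambda>t. act (-t)) (nhds c))"
  have l1: "(act \<longlongrightarrow> e) F1" unfolding F1_def F0_def by (rule tendsto_mono[OF inf_le1 filterlim_filtercomap])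
  have l2: "((\<lambda>t. act (-t)) \<longlongrightarrow> c) F1" unfolding F1_def by (rule tendsto_mono[OF inf_le2 filterlim_filtercomap])
  have "c \<in> EE" using lim_in_EE[OF F1[folded F1_def] l2] act_in_EE by blast
  then show ?thesis using F1 l1 l2 unfolding F1_def by blast
qed

definition einv :: "('x \<Rightarrow> 'x) \<Rightarrow> ('x \<Rightarrow> 'x)" where
  "einv e = (SOME c. c \<in> EE \<and> (\<forall>x. c (e x) = x) \<and> (\<forall>y. e (c y) = y))"

lemma einv_props:
  assumes "e \<in> EE"
  shows "einv e \<in> EE" "\<And>x. einv e (e x) = x" "\<And>y. e (einv e y) = y"
proof -
  obtain c F where cF: "c \<in> EE" "F \<noteq> bot" "(act \<longlongrightarrow> e) F" "((\<lambda>t. act (-t)) \<longlongrightarrow> c) F"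
    using good_filter_ex[OF assms] by blast
  have "c \<in> EE \<and> (\<forall>x. c (e x) = x) \<and> (\<forall>y. e (c y) = y)"
    using cF inverse_from_filter[OF cF(2-4)] by blast
  then have "einv e \<in> EE \<and> (\<forall>x. einv e (e x) = x) \<and> (\<forall>y. e (einv e y) = y)"
    unfolding einv_def by (rule someI[of "\<lambda>c. c \<in> EE \<and> (\<forall>x. c (e x) = x) \<and> (\<forall>y. e (c y) = y)"])
  then show "einv e \<in> EE" "\<And>x. einv e (e x) = x" "\<And>y. e (einv e y) = y" by auto
qed

lemma einv_unique:
  assumes "e \<in> EE" "\<And>x. c (e x) = x"
  shows "c = einv e"
proof
  fix y
  have "c y = c (e (einv e y))" using einv_props(3)[OF assms(1)] by simp
  also have "\<dots> = einv e y" using assms(2) by simp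
  finally show "c y = einv e y" .
qed

lemma good_filter:
  assumes "e \<in> EE"
  shows "\<exists>F. F \<noteq> bot \<and> (act \<longlongrightarrow> e) F \<and> ((\<lambda>t. act (-t)) \<longlongrightarrow> einv e) F"
proof -
  obtain c F where cF: "c \<in> EE" "F \<noteq> bot" "(act \<longlongrightarrow> e) F" "((\<lambda>t. act (-t)) \<longlongrightarrow> c) F"
    using good_filter_ex[OF assms] by blast
  have "c = einv e" by (rule einv_unique[OF assms inverse_from_filter(1)[OF cF(2-4)]])
  then show ?thesis using cF by blast
qed

lemma cont_left: "continuous_on UNIV (\<lambda>g::'x\<Rightarrow>'x. act t \<circ> g)"
proof (rule continuous_on_coordinatewise_then_product)
  fix x
  show "continuous_on UNIV (\<lambda>g::'x\<Rightarrow>'x. (act t \<circ> g) x)"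
    unfolding o_def by (rule continuous_on_compose2[OF cont_act cont_eval]) auto
qed

lemma cont_right: "continuous_on UNIV (\<lambda>g::'x\<Rightarrow>'x. g \<circ> h)"
  by (rule continuous_on_coordinatewise_then_product) (simp add: o_def)

lemma act_comp_EE:
  assumes "h \<in> EE" shows "act t \<circ> h \<in> EE"
proof -
  have "(\<lambda>g. act t \<circ> g) ` closure (range act) \<subseteq> EE"
  proof (rule image_closure_subset)
    show "continuous_on (closure (range act)) (\<lambda>g. act t \<circ> g)"
      by (rule continuous_on_subset[OF cont_left]) simp
    show "(\<lambda>g. act t \<circ> g) ` range act \<subseteq> EE"
    proof
      fix f assume "f \<in> (\<lambda>g. act t \<circ> g) ` range act"
      then obtain s where "f = act t \<circ> act s" by blast
      then have "f = act (t + s)" by (auto simp: act_add)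
      then show "f \<in> EE" using act_in_EE by simp
    qed
  qed (rule closed_EE)
  then show ?thesis using assms unfolding EE_def by blast
qed

lemma comp_EE:
  assumes "g \<in> EE" "h \<in> EE" shows "g \<circ> h \<in> EE"
proof -
  have "(\<lambda>g. g \<circ> h) ` closure (range act) \<subseteq> EE"
  proof (rule image_closure_subset)
    show "continuous_on (closure (range act)) (\<lambda>g. g \<circ> h)"
      by (rule continuous_on_subset[OF cont_right]) simp
    show "(\<lambda>g. g \<circ> h) ` range act \<subseteq> EE" using act_comp_EE[OF assms(2)] by auto
  qed (rule closed_EE)
  then show ?thesis using assms unfolding EE_def by blast
qed

lemma einv_comp:
  assumes "g \<in> EE" "h \<in> EE"
  shows "einv (g \<circ> h) = einv h \<circ> einv g"
  by (rule einv_unique[symmetric]) (use assms comp_EE einv_props in auto)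

lemma einv_einv: "e \<in> EE \<Longrightarrow> einv (einv e) = e"
  by (rule einv_unique[symmetric]) (use einv_props in auto)

lemma einv_cont: "continuous_on EE einv"
  unfolding continuous_on_def
proof
  fix e assume eE: "e \<in> EE"
  show "(einv \<longlongrightarrow> einv e) (at e within EE)"
  proof (rule ccontr)
    assume "\<not> (einv \<longlongrightarrow> einv e) (at e within EE)"
    then obtain N' where N': "open N'" "einv e \<in> N'" "\<not> eventually (\<lambda>g. einv g \<in> N') (at e within EE)"
      unfolding tendsto_def by blast
    define G where "G = inf (at e within EE) (principal {g. \<not> einv g \<in> N'})"
    have G: "G \<noteq> bot" unfolding G_def by (rule not_eventually_inf_principal[OF N'(3)])
    obtain c where G'ne: "inf G (filtercomap einv (nhds c)) \<noteq> bot"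
      using cluster_refine[OF compact_UNIV_fun[OF cpt] G] by blast
    define G' where "G' = inf G (filtercomap einv (nhds c))"
    have G': "G' \<noteq> bot" using G'ne G'_def by simp
    have limc: "(einv \<longlongrightarrow> c) G'" unfolding G'_def by (rule tendsto_mono[OF inf_le2 filterlim_filtercomap])
    have G'le: "G' \<le> at e within EE" unfolding G'_def G_def by (meson inf_le1 order_trans)
    have "eventually (\<lambda>g. einv g \<in> -N') G'"
    proof -
      have "eventually (\<lambda>g. einv g \<in> -N') G" unfolding G_def eventually_inf_principal by simp
      then show ?thesis unfolding G'_def by (rule filter_leD[OF inf_le1])
    qed
    then have cN: "c \<notin> N'" using Lim_in_closed_set[OF _ _ G' limc] N'(1) by blast
    define H where "H = inf (filtercomap act (nhds e)) (filtercomap (\<lambda>t. act (-t)) (nhds c))"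
    have H: "H \<noteq> bot" unfolding H_def
    proof (rule inf_ne_botI)
      fix P Q
      assume "eventually P (filtercomap act (nhds e))" "eventually Q (filtercomap (\<lambda>t. act (-t)) (nhds c))"
      then obtain P' Q' where P': "eventually P' (nhds e)" "\<forall>t. P' (act t) \<longrightarrow> P t"
        and Q': "eventually Q' (nhds c)" "\<forall>t. Q' (act (-t)) \<longrightarrow> Q t"
        unfolding eventually_filtercomap by blast
      obtain S where S: "open S" "e \<in> S" "\<forall>x\<in>S. P' x" using P'(1) unfolding eventually_nhds by blast
      obtain S' where S': "open S'" "c \<in> S'" "\<forall>x\<in>S'. Q' x" using Q'(1) unfolding eventually_nhds by blast
      have e1: "eventually (\<lambda>g. g \<in> S \<and> g \<in> EE) G'"
      proof -
        have "eventually (\<lambda>g. g \<in> S \<and> g \<in> EE) (at e within EE)"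
          using S(1,2) by (auto simp: eventually_at_topological)
        then show ?thesis by (rule filter_leD[OF G'le])
      qed
      have e2: "eventually (\<lambda>g. einv g \<in> S') G'"
        using limc S'(1,2) topological_tendstoD by blast
      obtain g where g: "g \<in> S" "g \<in> EE" "einv g \<in> S'"
        using eventually_happens[OF eventually_conj[OF e1 e2]] G' by blast
      obtain Fg where Fg: "Fg \<noteq> bot" "(act \<longlongrightarrow> g) Fg" "((\<lambda>t. act (-t)) \<longlongrightarrow> einv g) Fg"
        using good_filter[OF g(2)] by blast
      have "eventually (\<lambda>t. act t \<in> S) Fg" using Fg(2) S(1) g(1) topological_tendstoD by blast
      moreover have "eventually (\<lambda>t. act (-t) \<in> S') Fg" using Fg(3) S'(1) g(3) topological_tendstoD by blast
      ultimately obtain t where "act t \<in> S" "act (-t) \<in> S'"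
        using eventually_happens[OF eventually_conj] Fg(1) by blast
      then show "\<exists>t. P t \<and> Q t" using S(3) S'(3) P'(2) Q'(2) by blast
    qed
    have l1: "(act \<longlongrightarrow> e) H" unfolding H_def by (rule tendsto_mono[OF inf_le1 filterlim_filtercomap])
    have l2: "((\<lambda>t. act (-t)) \<longlongrightarrow> c) H" unfolding H_def by (rule tendsto_mono[OF inf_le2 filterlim_filtercomap])
    have "c = einv e" by (rule einv_unique[OF eE inverse_from_filter(1)[OF H l1 l2]])
    with cN N'(2) show False by simp
  qed
qed

lemma left_cont:
  assumes eE: "e \<in> EE"
  shows "continuous_on EE (\<lambda>g. e \<circ> g)"
proof -
  have eq: "e \<circ> g = einv (einv g \<circ> einv e)" if "g \<in> EE" for g
    using that eE by (simp add: einv_comp einv_props einv_einv)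
  have "continuous_on EE (einv \<circ> (\<lambda>g. g \<circ> einv e) \<circ> einv)"
  proof (intro continuous_on_compose)
    show "continuous_on EE einv" by (rule einv_cont)
    show "continuous_on (einv ` EE) (\<lambda>g. g \<circ> einv e)" by (rule continuous_on_subset[OF cont_right]) simp
    show "continuous_on ((\<lambda>g. g \<circ> einv e) ` einv ` EE) einv"
      by (rule continuous_on_subset[OF einv_cont]) (use eE einv_props comp_EE in auto)
  qed
  then show ?thesis by (rule continuous_on_cong[THEN iffD1, rotated 2]) (auto simp: eq)
qed

lemma minimal_eval_image:
  assumes M: "minimal_set act M" and p: "p \<in> M"
  shows "(\<lambda>g. g p) ` EE = M"
proof
  have Mc: "closed M" and Mi: "\<And>t y. y \<in> M \<Longrightarrow> act t y \<in> M" and Mo: "closure (range (\<lambda>t. act t p)) = M"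
    using M p unfolding minimal_set_def by auto
  show "(\<lambda>g. g p) ` EE \<subseteq> M" unfolding EE_def
  proof (rule image_closure_subset)
    show "continuous_on (closure (range act)) (\<lambda>g. g p)" by (rule continuous_on_subset[OF cont_eval]) simp
  qed (use Mc Mi p in auto)
  have "compact ((\<lambda>g. g p) ` EE)" by (rule compact_continuous_image[OF continuous_on_subset[OF cont_eval] compact_EE]) simp
  then have "closed ((\<lambda>g. g p) ` EE)" by (rule compact_imp_closed)
  moreover have "range (\<lambda>t. act t p) \<subseteq> (\<lambda>g. g p) ` EE" using act_in_EE by auto
  ultimately show "M \<subseteq> (\<lambda>g. g p) ` EE" using Mo closure_minimal by blast
qed

lemma EE_cont_on_minimal:
  assumes M: "minimal_set act M" and eE: "e \<in> EE"
  shows "continuous_on M e"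
proof -
  obtain p where p: "p \<in> M" using M unfolding minimal_set_def by auto
  have Mc: "closed M" using M unfolding minimal_set_def by auto
  have img: "(\<lambda>g. g p) ` EE = M" by (rule minimal_eval_image[OF M p])
  have cf: "continuous_on EE (\<lambda>g. e (g p))"
  proof -
    have "continuous_on EE ((\<lambda>g. g p) \<circ> (\<lambda>g. e \<circ> g))"
      by (rule continuous_on_compose[OF left_cont[OF eE] continuous_on_subset[OF cont_eval]]) simp
    then show ?thesis by (simp add: o_def)
  qed
  show ?thesis
    unfolding continuous_on_closed_vimage[OF Mc]
  proof (intro allI impI)
    fix B :: "'x set" assume B: "closed B"
    have eq: "e -` B \<inter> M = (\<lambda>g. g p) ` (EE \<inter> (\<lambda>g. e (g p)) -` B)"
      using img by auto
    have "closed (EE \<inter> (\<lambda>g. e (g p)) -` B)" by (rule continuous_closed_preimage[OF cf closed_EE B])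
    then have "compact (EE \<inter> (\<lambda>g. e (g p)) -` B)"
      using compact_EE by (metis compact_Int_closed inf.absorb_iff2 inf_le1 inf_commute)
    then have "compact ((\<lambda>g. g p) ` (EE \<inter> (\<lambda>g. e (g p)) -` B))"
      by (rule compact_continuous_image[rotated, OF _ continuous_on_subset[OF cont_eval]]) simp
    then show "closed (e -` B \<inter> M)" unfolding eq by (rule compact_imp_closed)
  qed
qed

end

locale cantor_setup = aa_flow act for act :: "'g::topological_group_add \<Rightarrow> 'x::t2_space \<Rightarrow> 'x" +
  fixes M :: "'x set" and \<phi> :: "nat \<Rightarrow> 'x \<Rightarrow> real" and r :: nat
    and child :: "'x set \<Rightarrow> bool \<Rightarrow> 'x set" and sT :: "'x set \<Rightarrow> 'g" and sI :: "'x set \<Rightarrow> nat"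
  assumes M: "minimal_set act M"
    and \<phi>c: "\<And>i. continuous_on UNIV (\<phi> i)" and \<phi>r: "\<And>i x. \<phi> i x \<in> {0..1}"
    and ch_open: "\<And>V b. open V \<Longrightarrow> V \<inter> M \<noteq> {} \<Longrightarrow> open (child V b)"
    and ch_sub: "\<And>V b. child V b \<subseteq> V"
    and ch_ne: "\<And>V b. open V \<Longrightarrow> V \<inter> M \<noteq> {} \<Longrightarrow> child V b \<inter> M \<noteq> {}"
    and ch_sep: "\<And>V z z'. open V \<Longrightarrow> V \<inter> M \<noteq> {} \<Longrightarrow> z \<in> closure (child V True) \<Longrightarrow>
        z' \<in> closure (child V False) \<Longrightarrow>
        sI V < r \<and> \<bar>\<phi> (sI V) (act (sT V) z) - \<phi> (sI V) (act (sT V) z')\<bar> \<ge> 1/6"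
begin

lemma Mc: "closed M" and Mne: "M \<noteq> {}" using M unfolding minimal_set_def by auto

definition Ul :: "bool list \<Rightarrow> 'x set" where "Ul = rec_list UNIV (\<lambda>b _ U. child U b)"

lemma Ul_simps[simp]: "Ul [] = UNIV" "Ul (b # s) = child (Ul s) b"
  by (simp_all add: Ul_def)

lemma Ul_ok: "open (Ul s) \<and> Ul s \<inter> M \<noteq> {}"
  by (induction s) (use Mne ch_open ch_ne in auto)

definition pt :: "bool list \<Rightarrow> 'x" where "pt s = (SOME x. x \<in> Ul s \<inter> M)"

lemma pt: "pt s \<in> Ul s" "pt s \<in> M"
proof -
  have "pt s \<in> Ul s \<inter> M" unfolding pt_def by (rule someI_ex) (use Ul_ok in blast)
  then show "pt s \<in> Ul s" "pt s \<in> M" by auto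
qed

definition path :: "(nat \<Rightarrow> bool) \<Rightarrow> nat \<Rightarrow> bool list" where
  "path \<sigma> n = rev (map \<sigma> [0..<n])"

lemma path_simps[simp]: "path \<sigma> 0 = []" "path \<sigma> (Suc n) = \<sigma> n # path \<sigma> n"
  by (simp_all add: path_def)

lemma path_eq: "(\<And>k. k < n \<Longrightarrow> \<sigma> k = \<tau> k) \<Longrightarrow> path \<sigma> n = path \<tau> n"
  unfolding path_def by (simp add: map_equality_iff)

lemma Ul_mono: "n \<le> m \<Longrightarrow> Ul (path \<sigma> m) \<subseteq> Ul (path \<sigma> n)"
proof (induction m rule: dec_induct)
  case base then show ?case by simp
next
  case (step m) then show ?case using ch_sub by (auto intro: order_trans)
qed

definition A :: "(nat \<Rightarrow> bool) \<Rightarrow> nat \<Rightarrow> 'x set" where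
  "A \<sigma> n = {pt (path \<sigma> m) | m. n \<le> m}"

lemma A_sub: "A \<sigma> n \<subseteq> Ul (path \<sigma> n)"
proof
  fix x assume "x \<in> A \<sigma> n"
  then obtain m where m: "n \<le> m" "x = pt (path \<sigma> m)" unfolding A_def by blast
  then have "x \<in> Ul (path \<sigma> m)" using pt(1) by simp
  then show "x \<in> Ul (path \<sigma> n)" using Ul_mono[OF m(1)] by blast
qed

lemma A_mono: "n \<le> N \<Longrightarrow> A \<sigma> N \<subseteq> A \<sigma> n"
  unfolding A_def by auto

lemma zz_ex: "\<exists>z. z \<in> (\<Inter>n. closure (A \<sigma> n))"
proof -
  have "UNIV \<inter> \<Inter> (range (\<lambda>n. closure (A \<sigma> n))) \<noteq> {}"
  proof (rule compact_imp_fip[OF cpt])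
    fix F' assume F': "finite F'" "F' \<subseteq> range (\<lambda>n. closure (A \<sigma> n))"
    then obtain I where I: "finite I" "F' = (\<lambda>n. closure (A \<sigma> n)) ` I"
      using finite_subset_image[OF F'(1) F'(2)] by blast
    define N where "N = (if I = {} then 0 else Max I)"
    have nN: "\<And>n. n \<in> I \<Longrightarrow> n \<le> N" unfolding N_def using I(1) by (auto split: if_splits)
    have "closure (A \<sigma> N) \<subseteq> closure (A \<sigma> n)" if "n \<in> I" for n
      by (rule closure_mono[OF A_mono[OF nN[OF that]]])
    then have "closure (A \<sigma> N) \<subseteq> \<Inter> F'" unfolding I(2) by blast
    moreover have "pt (path \<sigma> N) \<in> A \<sigma> N" unfolding A_def by blast
    ultimately show "UNIV \<inter> \<Inter> F' \<noteq> {}" using closure_subset by blast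
  qed auto
  then show ?thesis by auto
qed

definition zz :: "(nat \<Rightarrow> bool) \<Rightarrow> 'x" where "zz \<sigma> = (SOME z. z \<in> (\<Inter>n. closure (A \<sigma> n)))"

lemma zz_in: "zz \<sigma> \<in> closure (A \<sigma> n)"
proof -
  have "zz \<sigma> \<in> (\<Inter>n. closure (A \<sigma> n))" unfolding zz_def by (rule someI_ex[OF zz_ex])
  then show ?thesis by blast
qed

lemma zz_Ul: "zz \<sigma> \<in> closure (Ul (path \<sigma> n))"
  using zz_in[of \<sigma> n] closure_mono[OF A_sub] by blast

lemma zz_M: "zz \<sigma> \<in> M"
proof -
  have "A \<sigma> 0 \<subseteq> M" unfolding A_def using pt(2) by blast
  then have "closure (A \<sigma> 0) \<subseteq> M" using Mc closure_minimal by blast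
  then show ?thesis using zz_in by blast
qed

lemma zz_pt: "zz \<sigma> \<in> closure (range pt)"
proof -
  have "A \<sigma> 0 \<subseteq> range pt" unfolding A_def by blast
  then show ?thesis using zz_in[of \<sigma> 0] closure_mono by blast
qed

lemma zz_sep:
  assumes "\<sigma> \<noteq> \<tau>"
  shows "\<exists>t i. i < r \<and> \<bar>\<phi> i (act t (zz \<sigma>)) - \<phi> i (act t (zz \<tau>))\<bar> \<ge> 1/6"
proof -
  have ex: "\<exists>k. \<sigma> k \<noteq> \<tau> k" using assms by auto
  define k where "k = (LEAST k. \<sigma> k \<noteq> \<tau> k)"
  have k: "\<sigma> k \<noteq> \<tau> k" unfolding k_def by (rule LeastI_ex[OF ex])
  have "\<And>j. j < k \<Longrightarrow> \<sigma> j = \<tau> j" unfolding k_def using not_less_Least by blast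
  then have pe: "path \<sigma> k = path \<tau> k" by (rule path_eq)
  define V where "V = Ul (path \<sigma> k)"
  have V: "open V" "V \<inter> M \<noteq> {}" unfolding V_def using Ul_ok by auto
  have zs: "zz \<sigma> \<in> closure (child V (\<sigma> k))" using zz_Ul[of \<sigma> "Suc k"] unfolding V_def by simp
  have zt: "zz \<tau> \<in> closure (child V (\<tau> k))" using zz_Ul[of \<tau> "Suc k"] unfolding V_def pe by simp
  show ?thesis
  proof (cases "\<sigma> k")
    case True
    then have "\<not> \<tau> k" using k by simp
    then show ?thesis using ch_sep[OF V, of "zz \<sigma>" "zz \<tau>"] zs zt True by auto
  next
    case False
    then have "\<tau> k" using k by simp
    then have "sI V < r \<and> \<bar>\<phi> (sI V) (act (sT V) (zz \<tau>)) - \<phi> (sI V) (act (sT V) (zz \<sigma>))\<bar> \<ge> 1/6"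
      using ch_sep[OF V, of "zz \<tau>" "zz \<sigma>"] zs zt False by auto
    then show ?thesis by (metis abs_minus_commute)
  qed
qed

end

context cantor_setup begin

definition xs :: "nat \<Rightarrow> 'x" where "xs k = pt (from_nat k)"

definition PP :: "('x \<Rightarrow> 'x) \<Rightarrow> (nat \<times> nat \<Rightarrow> real)" where
  "PP g = (\<lambda>p. \<phi> (fst p) (g (xs (snd p))))"

lemma cont_phi_eval: "continuous_on UNIV (\<lambda>g::'x\<Rightarrow>'x. \<phi> i (g z))"
  by (rule continuous_on_compose2[OF \<phi>c cont_eval]) auto

lemma cont_PP: "continuous_on UNIV PP"
  unfolding PP_def by (rule continuous_on_coordinatewise_then_product) (rule cont_phi_eval)

lemma phi_cont_M: "g \<in> EE \<Longrightarrow> continuous_on M (\<lambda>x. \<phi> i (g x))"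
  by (rule continuous_on_compose2[OF \<phi>c EE_cont_on_minimal[OF M]]) auto

lemma fact1:
  assumes g: "g \<in> EE" and g': "g' \<in> EE" and P: "PP g = PP g'"
  shows "\<phi> i (g (zz \<sigma>)) = \<phi> i (g' (zz \<sigma>))"
proof -
  let ?h = "\<lambda>x. \<phi> i (g x) - \<phi> i (g' x)"
  have ch: "continuous_on M ?h" by (intro continuous_on_diff phi_cont_M g g')
  have cl: "closed (M \<inter> ?h -` {0})" by (rule continuous_closed_preimage[OF ch Mc]) simp
  have "range pt \<subseteq> M \<inter> ?h -` {0}"
  proof
    fix x assume "x \<in> range pt"
    then obtain s where s: "x = pt s" by blast
    have "PP g (i, to_nat s) = PP g' (i, to_nat s)" using P by simp
    then have "?h x = 0" unfolding PP_def xs_def s by simp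
    then show "x \<in> M \<inter> ?h -` {0}" using pt(2) s by simp
  qed
  then have "closure (range pt) \<subseteq> M \<inter> ?h -` {0}" using cl closure_minimal by blast
  then have "zz \<sigma> \<in> M \<inter> ?h -` {0}" using zz_pt by (rule subsetD)
  then show ?thesis by simp
qed


lemma fact2:
  "\<exists>\<delta>>0. \<forall>g\<in>EE. \<forall>g'\<in>EE. dist (PP g) (PP g') < \<delta> \<longrightarrow>
      (\<forall>i<r. \<bar>\<phi> i (g (zz \<sigma>)) - \<phi> i (g' (zz \<sigma>))\<bar> < 1/24)"
proof -
  define z where "z = zz \<sigma>"
  define B where "B i = {p::('x\<Rightarrow>'x)\<times>('x\<Rightarrow>'x). 1/24 \<le> \<bar>\<phi> i (fst p z) - \<phi> i (snd p z)\<bar>}" for i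
  define S where "S = (EE \<times> EE) \<inter> (\<Union>i\<in>{..<r}. B i)"
  have inS: "(g, g') \<in> S" if "g \<in> EE" "g' \<in> EE" "i < r" "1/24 \<le> \<bar>\<phi> i (g z) - \<phi> i (g' z)\<bar>" for g g' i
  proof -
    have "(g, g') \<in> B i" unfolding B_def using that(4) by simp
    then have "(g, g') \<in> (\<Union>i\<in>{..<r}. B i)" using that(3) by (intro UN_I[of i]) auto
    then show ?thesis unfolding S_def using that(1,2) by simp
  qed
  have notS: "\<bar>\<phi> i (g z) - \<phi> i (g' z)\<bar> < 1/24" if "(g, g') \<notin> S" "g \<in> EE" "g' \<in> EE" "i < r" for g g' i
    using inS[OF that(2-4)] that(1) by force
  show ?thesis
  proof (cases "S = {}")
    case True
    show ?thesis
      by (rule exI[of _ 1]) (use notS True in \<open>simp add: z_def\<close>)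
  next
    case False
    have c1: "continuous_on UNIV (\<lambda>p::('x\<Rightarrow>'x)\<times>('x\<Rightarrow>'x). \<phi> i (fst p z))" for i
      by (rule continuous_on_compose2[OF cont_phi_eval continuous_on_fst[OF continuous_on_id]]) auto
    have c2: "continuous_on UNIV (\<lambda>p::('x\<Rightarrow>'x)\<times>('x\<Rightarrow>'x). \<phi> i (snd p z))" for i
      by (rule continuous_on_compose2[OF cont_phi_eval continuous_on_snd[OF continuous_on_id]]) auto
    have "closed (B i)" for i unfolding B_def
      by (rule closed_Collect_le[OF continuous_on_const continuous_on_rabs[OF continuous_on_diff[OF c1 c2]]])
    then have "closed (\<Union>i\<in>{..<r}. B i)" by (intro closed_UN) auto
    moreover have "compact (EE \<times> EE)" by (rule compact_Times[OF compact_EE compact_EE])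
    ultimately have cS: "compact S" unfolding S_def by (rule compact_Int_closed[rotated])
    define f where "f p = dist (PP (fst p)) (PP (snd p))" for p :: "('x\<Rightarrow>'x)\<times>('x\<Rightarrow>'x)"
    have cf0: "continuous_on UNIV f" unfolding f_def
      by (intro continuous_on_dist continuous_on_compose2[OF cont_PP] continuous_on_fst continuous_on_snd continuous_on_id) auto
    have cf: "continuous_on S f" by (rule continuous_on_subset[OF cf0]) simp
    obtain p0 where p0: "p0 \<in> S" "\<And>p. p \<in> S \<Longrightarrow> f p0 \<le> f p"
      using continuous_attains_inf[OF cS False cf] by blast
    obtain a0 b0 where ab0: "p0 = (a0, b0)" by (cases p0)
    have a0: "a0 \<in> EE" "b0 \<in> EE" using p0(1) unfolding S_def ab0 by auto
    have pos: "f p0 > 0"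
    proof (rule ccontr)
      assume "\<not> f p0 > 0"
      then have "PP a0 = PP b0" unfolding f_def ab0 by simp
      then have eqi: "\<phi> i (a0 z) = \<phi> i (b0 z)" for i unfolding z_def by (rule fact1[OF a0])
      have "(a0, b0) \<in> S" using p0(1) ab0 by simp
      then obtain i where "i < r" "(a0, b0) \<in> B i" unfolding S_def by blast
      then show False unfolding B_def using eqi[of i] by simp
    qed
    show ?thesis
    proof (rule exI[of _ "f p0"], intro conjI ballI impI allI pos)
      fix g g' i assume g: "g \<in> EE" "g' \<in> EE" and d: "dist (PP g) (PP g') < f p0" and i: "i < r"
      have "(g, g') \<notin> S"
      proof
        assume "(g, g') \<in> S"
        then have "f p0 \<le> f (g, g')" by (rule p0(2))
        with d show False unfolding f_def by simp
      qed
      then show "\<bar>\<phi> i (g (zz \<sigma>)) - \<phi> i (g' (zz \<sigma>))\<bar> < 1/24"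
        using notS[OF _ g i] unfolding z_def by simp
    qed
  qed
qed

end

lemma floor_eq_close:
  fixes a b :: real
  assumes "\<lfloor>24 * a\<rfloor> = \<lfloor>24 * b\<rfloor>"
  shows "\<bar>a - b\<bar> < 1/24"
proof -
  have "of_int \<lfloor>24 * a\<rfloor> \<le> 24 * a" "24 * a < of_int \<lfloor>24 * a\<rfloor> + 1"
       "of_int \<lfloor>24 * b\<rfloor> \<le> 24 * b" "24 * b < of_int \<lfloor>24 * b\<rfloor> + 1"
    by linarith+
  then show ?thesis using assms by linarith
qed

context cantor_setup begin

definition good :: "nat \<Rightarrow> (nat \<Rightarrow> bool) \<Rightarrow> bool" where
  "good n \<sigma> \<longleftrightarrow> (\<forall>g\<in>EE. \<forall>g'\<in>EE. dist (PP g) (PP g') < inverse (real (Suc n)) \<longrightarrow>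
      (\<forall>i<r. \<bar>\<phi> i (g (zz \<sigma>)) - \<phi> i (g' (zz \<sigma>))\<bar> < 1/24))"

lemma good_ex: "\<exists>n. good n \<sigma>"
proof -
  obtain \<delta> where \<delta>: "\<delta> > 0" "\<forall>g\<in>EE. \<forall>g'\<in>EE. dist (PP g) (PP g') < \<delta> \<longrightarrow>
      (\<forall>i<r. \<bar>\<phi> i (g (zz \<sigma>)) - \<phi> i (g' (zz \<sigma>))\<bar> < 1/24)"
    using fact2 by blast
  obtain n where n: "inverse (real (Suc n)) < \<delta>" using reals_Archimedean[OF \<delta>(1)] by blast
  have "good n \<sigma>" unfolding good_def using \<delta>(2) n by force
  then show ?thesis by blast
qed

definition NN :: "(nat \<Rightarrow> bool) \<Rightarrow> nat" where "NN \<sigma> = (LEAST n. good n \<sigma>)"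

lemma good_NN: "good (NN \<sigma>) \<sigma>"
  unfolding NN_def by (rule LeastI_ex[OF good_ex])

lemma infinite_fiber: "\<exists>n. infinite {\<sigma>. NN \<sigma> = n}"
proof (rule ccontr)
  assume "\<nexists>n. infinite {\<sigma>. NN \<sigma> = n}"
  then have "\<And>n. countable {\<sigma>. NN \<sigma> = n}" by (simp add: countable_finite)
  then have "countable (\<Union>n. {\<sigma>. NN \<sigma> = n})" by (intro countable_UN) auto
  moreover have "(\<Union>n. {\<sigma>. NN \<sigma> = n}) = UNIV" by auto
  ultimately show False using uncountable_nat_bool by simp
qed

theorem contradiction: False
proof -
  obtain n where inf: "infinite {\<sigma>. NN \<sigma> = n}" using infinite_fiber by blast
  define \<Sigma> where "\<Sigma> = {\<sigma>. NN \<sigma> = n}"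
  define \<delta> where "\<delta> = inverse (real (Suc n))"
  have \<delta>: "\<delta> > 0" unfolding \<delta>_def by simp
  have cP: "compact (PP ` EE)"
    by (rule compact_continuous_image[OF continuous_on_subset[OF cont_PP] compact_EE]) simp
  have "PP ` EE \<subseteq> (\<Union>q\<in>PP ` EE. ball q \<delta>)"
  proof
    fix x assume "x \<in> PP ` EE"
    moreover have "x \<in> ball x \<delta>" using \<delta> by simp
    ultimately show "x \<in> (\<Union>q\<in>PP ` EE. ball q \<delta>)" by (rule UN_I[where B="\<lambda>q. ball q \<delta>"])
  qed
  then obtain C' where C': "C' \<subseteq> PP ` EE" "finite C'" "PP ` EE \<subseteq> (\<Union>q\<in>C'. ball q \<delta>)"
    using compactE_image[OF cP, of "PP ` EE" "\<lambda>q. ball q \<delta>"] by blast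
  define pre where "pre q = (SOME g. g \<in> EE \<and> PP g = q)" for q
  have pre: "pre q \<in> EE" "PP (pre q) = q" if "q \<in> C'" for q
  proof -
    have "q \<in> PP ` EE" using that C'(1) by (rule subsetD[rotated])
    then obtain g where "g \<in> EE" "q = PP g" by (rule imageE)
    then have "\<exists>g. g \<in> EE \<and> PP g = q" by blast
    then have "pre q \<in> EE \<and> PP (pre q) = q" unfolding pre_def by (rule someI_ex)
    then show "pre q \<in> EE" "PP (pre q) = q" by auto
  qed
  define G0 where "G0 = pre ` C'"
  have G0fin: "finite G0" unfolding G0_def using C'(2) by (rule finite_imageI)
  have G0E: "G0 \<subseteq> EE" unfolding G0_def using pre(1) by (rule image_subsetI)
  have net: "\<exists>g0\<in>G0. dist (PP g) (PP g0) < \<delta>" if "g \<in> EE" for g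
  proof -
    have "PP g \<in> PP ` EE" using that by (rule imageI)
    then have "PP g \<in> (\<Union>q\<in>C'. ball q \<delta>)" using C'(3) by (rule subsetD[rotated])
    then obtain q where q: "q \<in> C'" "PP g \<in> ball q \<delta>" by (rule UN_E)
    have "dist (PP g) (PP (pre q)) < \<delta>" using q(2) pre(2)[OF q(1)] by (simp add: dist_commute)
    moreover have "pre q \<in> G0" unfolding G0_def using q(1) by (rule imageI)
    ultimately show ?thesis by (rule bexI)
  qed
  define cell where "cell \<sigma> = restrict (\<lambda>p. \<lfloor>24 * \<phi> (fst p) (snd p (zz \<sigma>))\<rfloor>) ({..<r} \<times> G0)" for \<sigma>
  have cellin: "cell \<sigma> \<in> Pi\<^sub>E ({..<r} \<times> G0) (\<lambda>_. {0..24::int})" for \<sigma>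
    unfolding cell_def restrict_PiE_iff
  proof
    fix p
    have "0 \<le> \<phi> (fst p) (snd p (zz \<sigma>))" "\<phi> (fst p) (snd p (zz \<sigma>)) \<le> 1" using \<phi>r by (auto simp: atLeastAtMost_iff)
    then show "\<lfloor>24 * \<phi> (fst p) (snd p (zz \<sigma>))\<rfloor> \<in> {0..24}" by (auto intro!: floor_mono)
  qed
  have finP: "finite (Pi\<^sub>E ({..<r} \<times> G0) (\<lambda>_. {0..24::int}))"
    by (rule finite_PiE) (use G0fin in auto)
  have "\<not> inj_on cell \<Sigma>"
  proof
    assume "inj_on cell \<Sigma>"
    moreover have "finite (cell ` \<Sigma>)" using cellin by (intro finite_subset[OF _ finP]) auto
    ultimately have "finite \<Sigma>" by (rule finite_imageD[rotated])
    with inf show False unfolding \<Sigma>_def by simp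
  qed
  then obtain \<sigma> \<tau> where st: "\<sigma> \<in> \<Sigma>" "\<tau> \<in> \<Sigma>" "\<sigma> \<noteq> \<tau>" "cell \<sigma> = cell \<tau>"
    unfolding inj_on_def by blast
  obtain t i where ti: "i < r" "\<bar>\<phi> i (act t (zz \<sigma>)) - \<phi> i (act t (zz \<tau>))\<bar> \<ge> 1/6"
    using zz_sep[OF st(3)] by blast
  obtain g0 where g0: "g0 \<in> G0" "dist (PP (act t)) (PP g0) < \<delta>" using net[OF act_in_EE] by blast
  have g0E: "g0 \<in> EE" using g0(1) G0E by blast
  have nn: "NN \<sigma> = n" "NN \<tau> = n" using st(1,2) unfolding \<Sigma>_def by auto
  have gs: "good n \<sigma>" "good n \<tau>" using good_NN[of \<sigma>] good_NN[of \<tau>] nn by simp_all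
  have g0d: "dist (PP (act t)) (PP g0) < inverse (real (Suc n))" using g0(2) unfolding \<delta>_def .
  have d1: "\<bar>\<phi> i (act t (zz \<sigma>)) - \<phi> i (g0 (zz \<sigma>))\<bar> < 1/24"
    using gs(1)[unfolded good_def, rule_format, OF act_in_EE g0E g0d ti(1)] .
  have d2: "\<bar>\<phi> i (act t (zz \<tau>)) - \<phi> i (g0 (zz \<tau>))\<bar> < 1/24"
    using gs(2)[unfolded good_def, rule_format, OF act_in_EE g0E g0d ti(1)] .
  have "(i, g0) \<in> {..<r} \<times> G0" using ti(1) g0(1) by simp
  then have "cell \<sigma> (i, g0) = cell \<tau> (i, g0)" using st(4) by simp
  then have "\<lfloor>24 * \<phi> i (g0 (zz \<sigma>))\<rfloor> = \<lfloor>24 * \<phi> i (g0 (zz \<tau>))\<rfloor>"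
    unfolding cell_def using \<open>(i, g0) \<in> {..<r} \<times> G0\<close> by simp
  then have d3: "\<bar>\<phi> i (g0 (zz \<sigma>)) - \<phi> i (g0 (zz \<tau>))\<bar> < 1/24" by (rule floor_eq_close)
  from d1 d2 d3 ti(2) show False by linarith
qed

end

context aa_flow begin

lemma KL:
  fixes \<phi> :: "nat \<Rightarrow> 'x \<Rightarrow> real" and r :: nat
  assumes M: "minimal_set act M" and \<phi>c: "\<And>i. continuous_on UNIV (\<phi> i)"
    and \<phi>r: "\<And>i x. \<phi> i x \<in> {0..1}"
  shows "\<exists>V. open V \<and> V \<inter> M \<noteq> {} \<and>
     (\<forall>t. \<forall>x\<in>V\<inter>M. \<forall>y\<in>V\<inter>M. \<forall>i<r. \<bar>\<phi> i (act t x) - \<phi> i (act t y)\<bar> \<le> 1/3)"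
proof (rule ccontr)
  assume nb: "\<not> ?thesis"
  define Q where "Q V w \<longleftrightarrow> fst (snd w) \<in> V \<inter> M \<and> fst (snd (snd w)) \<in> V \<inter> M \<and> snd (snd (snd w)) < r \<and>
      \<bar>\<phi> (snd (snd (snd w))) (act (fst w) (fst (snd w))) - \<phi> (snd (snd (snd w))) (act (fst w) (fst (snd (snd w))))\<bar> > 1/3"
    for V and w :: "'g \<times> 'x \<times> 'x \<times> nat"
  have exw: "\<exists>w. Q V w" if "open V" "V \<inter> M \<noteq> {}" for V
  proof -
    have "\<not> (\<forall>t. \<forall>x\<in>V\<inter>M. \<forall>y\<in>V\<inter>M. \<forall>i<r. \<bar>\<phi> i (act t x) - \<phi> i (act t y)\<bar> \<le> 1/3)"
      using nb that by blast
    then have "\<exists>t x y i. x \<in> V \<inter> M \<and> y \<in> V \<inter> M \<and> i < r \<and> \<bar>\<phi> i (act t x) - \<phi> i (act t y)\<bar> > 1/3"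
      by (auto simp: not_le)
    then obtain t x y i where "x \<in> V \<inter> M" "y \<in> V \<inter> M" "i < r"
      "\<bar>\<phi> i (act t x) - \<phi> i (act t y)\<bar> > 1/3"
      by blast
    then have "Q V (t, x, y, i)" unfolding Q_def by simp
    then show ?thesis by blast
  qed
  define wit where "wit V = (SOME w. Q V w)" for V
  define sT where "sT V = fst (wit V)" for V
  define xa where "xa V = fst (snd (wit V))" for V
  define xb where "xb V = fst (snd (snd (wit V)))" for V
  define sI where "sI V = snd (snd (snd (wit V)))" for V
  have wp: "xa V \<in> V \<inter> M \<and> xb V \<in> V \<inter> M \<and> sI V < r \<and>
      \<bar>\<phi> (sI V) (act (sT V) (xa V)) - \<phi> (sI V) (act (sT V) (xb V))\<bar> > 1/3"
    if "open V" "V \<inter> M \<noteq> {}" for V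
  proof -
    have "Q V (wit V)" unfolding wit_def by (rule someI_ex[OF exw[OF that]])
    then show ?thesis unfolding Q_def sT_def xa_def xb_def sI_def by simp
  qed
  define child where "child V b = V \<inter> {z. \<bar>\<phi> (sI V) (act (sT V) z) - \<phi> (sI V) (act (sT V) (if b then xa V else xb V))\<bar> < 1/12}"
    for V b
  have cphi: "continuous_on UNIV (\<lambda>z. \<phi> i (act t z))" for i t
    by (rule continuous_on_compose2[OF \<phi>c cont_act]) auto
  have cabs: "continuous_on UNIV (\<lambda>z. \<bar>\<phi> i (act t z) - c\<bar>)" for i t c
    by (rule continuous_on_rabs[OF continuous_on_diff[OF cphi continuous_on_const]])
  have clos: "closure (child V b) \<subseteq> {z. \<bar>\<phi> (sI V) (act (sT V) z) - \<phi> (sI V) (act (sT V) (if b then xa V else xb V))\<bar> \<le> 1/12}"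
    for V b
  proof (rule closure_minimal)
    show "child V b \<subseteq> {z. \<bar>\<phi> (sI V) (act (sT V) z) - \<phi> (sI V) (act (sT V) (if b then xa V else xb V))\<bar> \<le> 1/12}"
      unfolding child_def by auto
    show "closed {z. \<bar>\<phi> (sI V) (act (sT V) z) - \<phi> (sI V) (act (sT V) (if b then xa V else xb V))\<bar> \<le> 1/12}"
      by (rule closed_Collect_le[OF cabs continuous_on_const])
  qed
  have "cantor_setup act M \<phi> r child sT sI"
  proof (unfold_locales)
    show "minimal_set act M" by (rule M)
    show "\<And>i. continuous_on UNIV (\<phi> i)" by (rule \<phi>c)
    show "\<And>i x. \<phi> i x \<in> {0..1}" by (rule \<phi>r)
    show "\<And>V b. open V \<Longrightarrow> V \<inter> M \<noteq> {} \<Longrightarrow> open (child V b)"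
      unfolding child_def by (intro open_Int open_Collect_less[OF cabs continuous_on_const])
    show "\<And>V b. child V b \<subseteq> V" unfolding child_def by auto
    show "\<And>V b. open V \<Longrightarrow> V \<inter> M \<noteq> {} \<Longrightarrow> child V b \<inter> M \<noteq> {}"
    proof -
      fix V b assume V: "open V" "V \<inter> M \<noteq> {}"
      have "(if b then xa V else xb V) \<in> child V b \<inter> M" using wp[OF V] unfolding child_def by auto
      then show "child V b \<inter> M \<noteq> {}" by blast
    qed
    show "\<And>V z z'. open V \<Longrightarrow> V \<inter> M \<noteq> {} \<Longrightarrow> z \<in> closure (child V True) \<Longrightarrow>
        z' \<in> closure (child V False) \<Longrightarrow>
        sI V < r \<and> \<bar>\<phi> (sI V) (act (sT V) z) - \<phi> (sI V) (act (sT V) z')\<bar> \<ge> 1/6"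
    proof -
      fix V z z' assume V: "open V" "V \<inter> M \<noteq> {}" and z: "z \<in> closure (child V True)"
        and z': "z' \<in> closure (child V False)"
      have a: "\<bar>\<phi> (sI V) (act (sT V) z) - \<phi> (sI V) (act (sT V) (xa V))\<bar> \<le> 1/12"
        using clos[of V True] z by auto
      have b: "\<bar>\<phi> (sI V) (act (sT V) z') - \<phi> (sI V) (act (sT V) (xb V))\<bar> \<le> 1/12"
        using clos[of V False] z' by auto
      have c: "\<bar>\<phi> (sI V) (act (sT V) (xa V)) - \<phi> (sI V) (act (sT V) (xb V))\<bar> > 1/3" and r: "sI V < r"
        using wp[OF V] by auto
      from a b c have "\<bar>\<phi> (sI V) (act (sT V) z) - \<phi> (sI V) (act (sT V) z')\<bar> \<ge> 1/6" by linarith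
      then show "sI V < r \<and> \<bar>\<phi> (sI V) (act (sT V) z) - \<phi> (sI V) (act (sT V) z')\<bar> \<ge> 1/6" using r by simp
    qed
  qed
  then show False by (rule cantor_setup.contradiction)
qed

end

context aa_flow begin

lemma urysohn_family:
  assumes M: "minimal_set act M" and U: "open U" "\<And>x. x \<in> M \<Longrightarrow> (x, x) \<in> U"
  obtains \<Phi> :: "nat \<Rightarrow> 'x \<Rightarrow> real" and r where "\<And>i. continuous_on UNIV (\<Phi> i)" "\<And>i x. \<Phi> i x \<in> {0..1}"
    "\<And>a b. a \<in> M \<Longrightarrow> b \<in> M \<Longrightarrow> (\<forall>i<r. \<bar>\<Phi> i a - \<Phi> i b\<bar> \<le> 1/3) \<Longrightarrow> (a, b) \<in> U"
proof -
  have Mc: "closed M" using M unfolding minimal_set_def by auto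
  have cM: "compact M" using Mc cpt by (metis compact_Int_closed inf_top.left_neutral)
  define C where "C = (M \<times> M) \<inter> -U"
  have cC: "compact C" unfolding C_def
    by (rule compact_Int_closed[OF compact_Times[OF cM cM]]) (use U(1) in auto)
  have neq: "fst p \<noteq> snd p" if "p \<in> C" for p
    using that U(2) unfolding C_def by (cases p) auto
  define ph where "ph p = (SOME \<phi> :: 'x \<Rightarrow> real. continuous_on UNIV \<phi> \<and> (\<forall>x. \<phi> x \<in> {0..1}) \<and> \<phi> (fst p) = 0 \<and> \<phi> (snd p) = 1)" for p
  have ph: "continuous_on UNIV (ph p) \<and> (\<forall>x. ph p x \<in> {0..1}) \<and> ph p (fst p) = 0 \<and> ph p (snd p) = 1"
    if pC: "p \<in> C" for p
  proof -
    obtain \<phi> :: "'x \<Rightarrow> real" where "continuous_on UNIV \<phi>" "\<And>x. \<phi> x \<in> {0..1}" "\<phi> (fst p) = 0" "\<phi> (snd p) = 1"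
      using urysohn_pts[OF neq[OF pC]] by blast
    then have "\<exists>\<phi> :: 'x \<Rightarrow> real. continuous_on UNIV \<phi> \<and> (\<forall>x. \<phi> x \<in> {0..1}) \<and> \<phi> (fst p) = 0 \<and> \<phi> (snd p) = 1"
      by blast
    then show ?thesis unfolding ph_def by (rule someI_ex)
  qed
  define B where "B p = {q :: 'x \<times> 'x. 1/3 < \<bar>ph p (fst q) - ph p (snd q)\<bar>}" for p
  have Bopen: "open (B p)" if "p \<in> C" for p
  proof -
    have c1: "continuous_on UNIV (\<lambda>q::'x\<times>'x. ph p (fst q))"
      by (rule continuous_on_compose2[OF conjunct1[OF ph[OF that]] continuous_on_fst[OF continuous_on_id]]) auto
    have c2: "continuous_on UNIV (\<lambda>q::'x\<times>'x. ph p (snd q))"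
      by (rule continuous_on_compose2[OF conjunct1[OF ph[OF that]] continuous_on_snd[OF continuous_on_id]]) auto
    show ?thesis unfolding B_def
      by (rule open_Collect_less[OF continuous_on_const continuous_on_rabs[OF continuous_on_diff[OF c1 c2]]])
  qed
  have "C \<subseteq> (\<Union>p\<in>C. B p)"
  proof
    fix p assume p: "p \<in> C"
    then have "p \<in> B p" using ph[OF p] unfolding B_def by simp
    then show "p \<in> (\<Union>p\<in>C. B p)" using p by blast
  qed
  then obtain D where D: "D \<subseteq> C" "finite D" "C \<subseteq> (\<Union>p\<in>D. B p)"
    using compactE_image[OF cC, of C B] Bopen by blast
  obtain h where h: "bij_betw h {0..<card D} D" using ex_bij_betw_nat_finite[OF D(2)] by blast
  define r where "r = card D"
  define \<Phi> where "\<Phi> i = (if i < r then ph (h i) else (\<lambda>_. 0))" for i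
  have hD: "h i \<in> D" if "i < r" for i using h that unfolding r_def bij_betw_def by auto
  show ?thesis
  proof (rule that[of \<Phi> r])
    fix i
    have phC: "h i \<in> C" if "i < r" using hD[OF that] D(1) by blast
    show "continuous_on UNIV (\<Phi> i)" unfolding \<Phi>_def using ph[OF phC] by auto
    show "\<Phi> i x \<in> {0..1}" for x unfolding \<Phi>_def using ph[OF phC] by auto
  next
    fix a b assume ab: "a \<in> M" "b \<in> M" and cl: "\<forall>i<r. \<bar>\<Phi> i a - \<Phi> i b\<bar> \<le> 1/3"
    show "(a, b) \<in> U"
    proof (rule ccontr)
      assume "(a, b) \<notin> U"
      then have "(a, b) \<in> C" using ab unfolding C_def by simp
      then obtain p where p: "p \<in> D" "(a, b) \<in> B p" using D(3) by blast
      have "p \<in> h ` {0..<card D}" using h p(1) unfolding bij_betw_def by simp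
      then obtain i where i: "i < r" "h i = p" unfolding r_def by auto
      have "\<bar>\<Phi> i a - \<Phi> i b\<bar> > 1/3" using p(2) i unfolding \<Phi>_def B_def by simp
      with cl i(1) show False by force
    qed
  qed
qed

lemma equi_minimal:
  assumes M: "minimal_set act M"
  shows "equicontinuous_on act M"
  unfolding equicontinuous_on_def
proof (intro allI impI)
  fix \<alpha> assume "entourage_on M \<alpha>"
  then obtain U where \<alpha>: "\<alpha> \<subseteq> M \<times> M" "open U" "\<And>x. x \<in> M \<Longrightarrow> (x, x) \<in> U" "U \<inter> (M \<times> M) \<subseteq> \<alpha>"
    unfolding entourage_on_def by blast
  have Mi: "\<And>t y. y \<in> M \<Longrightarrow> act t y \<in> M" and Mo: "\<And>y. y \<in> M \<Longrightarrow> closure (range (\<lambda>t. act t y)) = M"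
    using M unfolding minimal_set_def by auto
  obtain \<Phi> :: "nat \<Rightarrow> 'x \<Rightarrow> real" and r where \<Phi>: "\<And>i. continuous_on UNIV (\<Phi> i)" "\<And>i x. \<Phi> i x \<in> {0..1}"
    "\<And>a b. a \<in> M \<Longrightarrow> b \<in> M \<Longrightarrow> (\<forall>i<r. \<bar>\<Phi> i a - \<Phi> i b\<bar> \<le> 1/3) \<Longrightarrow> (a, b) \<in> U"
    apply (rule urysohn_family[OF M \<alpha>(2)])
     apply (erule \<alpha>(3))
    apply (rule that)
      apply assumption+
    done
  have "\<exists>V. open V \<and> V \<inter> M \<noteq> {} \<and>
     (\<forall>t. \<forall>x\<in>V\<inter>M. \<forall>y\<in>V\<inter>M. \<forall>i<r. \<bar>\<Phi> i (act t x) - \<Phi> i (act t y)\<bar> \<le> 1/3)"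
    by (rule KL[OF M \<Phi>(1,2)])
  then obtain V0 where V0: "open V0" "V0 \<inter> M \<noteq> {}"
    "\<forall>t. \<forall>x\<in>V0\<inter>M. \<forall>y\<in>V0\<inter>M. \<forall>i<r. \<bar>\<Phi> i (act t x) - \<Phi> i (act t y)\<bar> \<le> 1/3"
    by blast
  have V0\<alpha>: "(act t x, act t y) \<in> \<alpha>" if "x \<in> V0 \<inter> M" "y \<in> V0 \<inter> M" for t x y
  proof -
    have m: "act t x \<in> M" "act t y \<in> M" using that Mi by auto
    have "\<forall>i<r. \<bar>\<Phi> i (act t x) - \<Phi> i (act t y)\<bar> \<le> 1/3" using V0(3) that by blast
    then have "(act t x, act t y) \<in> U" by (rule \<Phi>(3)[OF m])
    then show ?thesis using \<alpha>(4) m by blast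
  qed
  obtain x0 where x0: "x0 \<in> V0" "x0 \<in> M" using V0(2) by blast
  have spread: "\<exists>V. open V \<and> z \<in> V \<and> (\<forall>t. \<forall>x\<in>V\<inter>M. \<forall>y\<in>V\<inter>M. (act t x, act t y) \<in> \<alpha>)" if z: "z \<in> M" for z
  proof -
    have "x0 \<in> closure (range (\<lambda>t. act t z))" using Mo[OF z] x0(2) by simp
    then have "V0 \<inter> closure (range (\<lambda>t. act t z)) \<noteq> {}" using x0(1) by blast
    then have "V0 \<inter> range (\<lambda>t. act t z) \<noteq> {}" using open_Int_closure_eq_empty[OF V0(1)] by simp
    then obtain s where s: "act s z \<in> V0" by blast
    define V where "V = act s -` V0"
    have "open V" unfolding V_def by (rule open_vimage_act[OF V0(1)])
    moreover have "z \<in> V" unfolding V_def using s by simp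
    moreover have "(act t x, act t y) \<in> \<alpha>" if "x \<in> V \<inter> M" "y \<in> V \<inter> M" for t x y
    proof -
      have "act s x \<in> V0 \<inter> M" "act s y \<in> V0 \<inter> M" using that Mi unfolding V_def by auto
      then have "(act (t + -s) (act s x), act (t + -s) (act s y)) \<in> \<alpha>" by (rule V0\<alpha>)
      moreover have "act (t + -s) (act s z) = act t z" for z
        by (metis act_add act_inv1)
      ultimately show ?thesis by metis
    qed
    ultimately show ?thesis by blast
  qed
  define Vz where "Vz z = (SOME V. open V \<and> z \<in> V \<and> (\<forall>t. \<forall>x\<in>V\<inter>M. \<forall>y\<in>V\<inter>M. (act t x, act t y) \<in> \<alpha>))" for z
  have Vz: "open (Vz z) \<and> z \<in> Vz z \<and> (\<forall>t. \<forall>x\<in>Vz z\<inter>M. \<forall>y\<in>Vz z\<inter>M. (act t x, act t y) \<in> \<alpha>)" if "z \<in> M" for z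
    unfolding Vz_def by (rule someI_ex[OF spread[OF that]])
  define U' where "U' = (\<Union>z\<in>M. Vz z \<times> Vz z)"
  define \<beta> where "\<beta> = U' \<inter> (M \<times> M)"
  have "open U'" unfolding U'_def using Vz by (intro open_UN ballI open_Times) auto
  moreover have "(x, x) \<in> U'" if "x \<in> M" for x unfolding U'_def using Vz[OF that] that by blast
  ultimately have "entourage_on M \<beta>" unfolding entourage_on_def \<beta>_def by (intro conjI exI[of _ U']) auto
  moreover have "(act t x, act t y) \<in> \<alpha>" if "(x, y) \<in> \<beta>" for x y t
  proof -
    have xy: "(x, y) \<in> U'" "x \<in> M" "y \<in> M" using that unfolding \<beta>_def by auto
    from xy(1) obtain z where z: "z \<in> M" "(x, y) \<in> Vz z \<times> Vz z" unfolding U'_def by (rule UN_E)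
    have "\<forall>t. \<forall>x\<in>Vz z\<inter>M. \<forall>y\<in>Vz z\<inter>M. (act t x, act t y) \<in> \<alpha>" using Vz[OF z(1)] by blast
    then show ?thesis using z(2) xy(2,3) by blast
  qed
  ultimately show "\<exists>\<beta>. entourage_on M \<beta> \<and> (\<forall>x y. (x, y) \<in> \<beta> \<longrightarrow> (\<forall>t. (act t x, act t y) \<in> \<alpha>))"
    by blast
qed

end

theorem mainTheorem5:
  fixes act :: "'g::topological_group_add \<Rightarrow> 'x::t2_space \<Rightarrow> 'x"
  assumes "compact (UNIV :: 'x set)"
    and "continuous_action act"
  shows "(\<forall>x. almost_automorphic_point act x) \<longleftrightarrow>
         (distal_flow act \<and> (\<forall>M. minimal_set act M \<longrightarrow> equicontinuous_on act M))"
proof -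
  interpret flow act using assms by unfold_locales
  show ?thesis
  proof
    assume A: "\<forall>x. almost_automorphic_point act x"
    interpret aa_flow act using A by unfold_locales
    have "distal_flow act" by (rule AA_distal[OF AA])
    moreover have "\<forall>M. minimal_set act M \<longrightarrow> equicontinuous_on act M" using equi_minimal by blast
    ultimately show "distal_flow act \<and> (\<forall>M. minimal_set act M \<longrightarrow> equicontinuous_on act M)" ..
  next
    assume B: "distal_flow act \<and> (\<forall>M. minimal_set act M \<longrightarrow> equicontinuous_on act M)"
    show "\<forall>x. almost_automorphic_point act x" using converse_AA B by blast
  qed
qed

end
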